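(* Let $M\ge2$ and consider a hierarchical system as described in the context, with $L=\sum_{l=1}^ML^{(l)}$. Let $x^{(1)}:[0,\infty)\to\mathbb{R}^{N^{(1)}}$ be the solution of $\dot x^{(1)}=-Lx^{(1)}$, $x^{(1)}(0)=x^{(1)}_0$. Then \[ \lim_{t\to\infty}x^{(1)}(t)=\frac{\mathbf{1}\mathbf{1}^TK}{\mathbf{1}^TK\mathbf{1}}\,x^{(1)}_0,\qquad K=\mathrm{diag}(a_1,\dots,a_{N^{(1)}}), \] where $\mathbf 1$ is the all-ones vector in $\mathbb{R}^{N^{(1)}}$. In particular, if $a_i=a_j$ for all $i,j$, all components of $x^{(1)}(t)$ converge to the average of the components of $x^{(1)}_0$.
   Context: Hierarchical structure. Fix an integer $M\ge 2$ and positive integers $N^{(1)},\dots,N^{(M)}$; set $N^{(M+1)}:=1$. For each $l\in\{1,\dots,M\}$ the $N^{(l)}$ nodes of layer $l$ are partitioned into $N^{(l+1)}$ groups $G^{(l)}_1,\dots,G^{(l)}_{N^{(l+1)}}$ of sizes $k^{(l)}_p\ge1$ (so $\sum_pk^{(l)}_p=N^{(l)}$), numbered consecutively: group $G^{(l)}_p$ consists of nodes $\sum_{m<p}k^{(l)}_m+1,\dots,\sum_{m\le p}k^{(l)}_m$ of layer $l$. Each group $G^{(l)}_p$ carries a connected undirected graph with binary adjacency matrix; $L^{(l)}_p$ is its Laplacian (degree matrix minus adjacency matrix), and $L^{(l)}_D=\mathrm{diag}(L^{(l)}_1,\dots,L^{(l)}_{N^{(l+1)}})$ (block diagonal). Weights: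 positive constants $a_1,\dots,a_{N^{(1)}}$; $a^{(1)}_i=a_i$, $a^{(l+1)}_p=\sum_{i\in G^{(l)}_p}a^{(l)}_i$; $K^{(l)}=\mathrm{diag}(a^{(l)}_1,\dots,a^{(l)}_{N^{(l)}})^{-1}$. For $l=1,\dots,M-1$: $B^{(l)}=\mathrm{diag}(\mathbf{1}_{k^{(l)}_1},\dots,\mathbf{1}_{k^{(l)}_{N^{(l+1)}}})\in\mathbb{R}^{N^{(l)}\times N^{(l+1)}}$ ($\mathbf 1_k$ all-ones column vector), $C^{(l)}=\mathrm{diag}(C^{(l)}_1,\dots,C^{(l)}_{N^{(l+1)}})\in\mathbb{R}^{N^{(l+1)}\times N^{(l)}}$ with each $C^{(l)}_p\in\mathbb{R}^{1\times k^{(l)}_p}$ having nonnegative entries summing to $1$. $L^{(1)}=K^{(1)}L^{(1)}_D$ and $L^{(l)}=B^{(1)}\cdots B^{(l-1)}K^{(l)}L^{(l)}_DC^{(l-1)}\cdots C^{(1)}$ for $l=2,\dots,M$. (The equation $\dot x^{(1)}=-Lx^{(1)}$ is the hierarchical system without interlayer delays.) *)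

theory Defs
  imports "HOL-Analysis.Analysis"
begin

text \<open>Layers are numbered 1..M (layer index l :: nat). N l is the number
 of nodes of layer l, nodes are indexed 0..<N l, groups of layer l are indexed
 0..<N (Suc l) and k l p is the size of group p of layer l.
 Matrices are functions nat \<Rightarrow> nat \<Rightarrow> real with explicit dimensions.
 adj l i j is the (block diagonal) adjacency matrix of layer l (the graphs on the groups),
 c l i is the entry of C^(l) belonging to node i of layer l (row = group of i).\<close>

definition mmult :: "nat \<Rightarrow> (nat \<Rightarrow> nat \<Rightarrow> real) \<Rightarrow> (nat \<Rightarrow> nat \<Rightarrow> real) \<Rightarrow> nat \<Rightarrow> nat \<Rightarrow> real" where
  "mmult n A B i j = (\<Sum>m<n. A i m * B m j)"

definition idm :: "nat \<Rightarrow> nat \<Rightarrow> real" where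
  "idm i j = (if i = j then 1 else 0)"

definition off :: "(nat \<Rightarrow> nat \<Rightarrow> nat) \<Rightarrow> nat \<Rightarrow> nat \<Rightarrow> nat" where
  "off k l p = (\<Sum>m<p. k l m)"

definition ingrp :: "(nat \<Rightarrow> nat \<Rightarrow> nat) \<Rightarrow> nat \<Rightarrow> nat \<Rightarrow> nat \<Rightarrow> bool" where
  "ingrp k l p i \<longleftrightarrow> off k l p \<le> i \<and> i < off k l (Suc p)"

definition Bmat :: "(nat \<Rightarrow> nat \<Rightarrow> nat) \<Rightarrow> nat \<Rightarrow> nat \<Rightarrow> nat \<Rightarrow> real" where
  "Bmat k l i p = (if ingrp k l p i then 1 else 0)"

definition Cmat :: "(nat \<Rightarrow> nat \<Rightarrow> nat) \<Rightarrow> (nat \<Rightarrow> nat \<Rightarrow> real) \<Rightarrow> nat \<Rightarrow> nat \<Rightarrow> nat \<Rightarrow> real" where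
  "Cmat k c l p i = (if ingrp k l p i then c l i else 0)"

fun aw :: "(nat \<Rightarrow> nat \<Rightarrow> nat) \<Rightarrow> (nat \<Rightarrow> real) \<Rightarrow> nat \<Rightarrow> nat \<Rightarrow> real" where
  "aw k a 0 i = 0"
| "aw k a (Suc 0) i = a i"
| "aw k a (Suc (Suc l)) p = (\<Sum>i \<in> {off k (Suc l) p..<off k (Suc l) (Suc p)}. aw k a (Suc l) i)"

definition LD :: "(nat \<Rightarrow> nat) \<Rightarrow> (nat \<Rightarrow> nat \<Rightarrow> nat \<Rightarrow> real) \<Rightarrow> nat \<Rightarrow> nat \<Rightarrow> nat \<Rightarrow> real" where
  "LD N adj l i j = (if i = j then (\<Sum>m<N l. adj l i m) else 0) - adj l i j"

definition KLD :: "(nat \<Rightarrow> nat) \<Rightarrow> (nat \<Rightarrow> nat \<Rightarrow> nat) \<Rightarrow> (nat \<Rightarrow> nat \<Rightarrow> nat \<Rightarrow> real) \<Rightarrow> (nat \<Rightarrow> real)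
    \<Rightarrow> nat \<Rightarrow> nat \<Rightarrow> nat \<Rightarrow> real" where
  "KLD N k adj a l i j = LD N adj l i j / aw k a l i"

text \<open>Bprod l = B^(1) ... B^(l-1) (N^(1) x N^(l)); Cprod l = C^(l-1) ... C^(1) (N^(l) x N^(1)).\<close>
fun Bprod :: "(nat \<Rightarrow> nat) \<Rightarrow> (nat \<Rightarrow> nat \<Rightarrow> nat) \<Rightarrow> nat \<Rightarrow> nat \<Rightarrow> nat \<Rightarrow> real" where
  "Bprod N k 0 = idm"
| "Bprod N k (Suc 0) = idm"
| "Bprod N k (Suc (Suc l)) = mmult (N (Suc l)) (Bprod N k (Suc l)) (Bmat k (Suc l))"

fun Cprod :: "(nat \<Rightarrow> nat) \<Rightarrow> (nat \<Rightarrow> nat \<Rightarrow> nat) \<Rightarrow> (nat \<Rightarrow> nat \<Rightarrow> real) \<Rightarrow> nat \<Rightarrow> nat \<Rightarrow> nat \<Rightarrow> real" where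
  "Cprod N k c 0 = idm"
| "Cprod N k c (Suc 0) = idm"
| "Cprod N k c (Suc (Suc l)) = mmult (N (Suc l)) (Cmat k c (Suc l)) (Cprod N k c (Suc l))"

definition Llayer :: "(nat \<Rightarrow> nat) \<Rightarrow> (nat \<Rightarrow> nat \<Rightarrow> nat) \<Rightarrow> (nat \<Rightarrow> nat \<Rightarrow> nat \<Rightarrow> real) \<Rightarrow> (nat \<Rightarrow> nat \<Rightarrow> real)
    \<Rightarrow> (nat \<Rightarrow> real) \<Rightarrow> nat \<Rightarrow> nat \<Rightarrow> nat \<Rightarrow> real" where
  "Llayer N k adj c a l =
     mmult (N l) (mmult (N l) (Bprod N k l) (KLD N k adj a l)) (Cprod N k c l)"

definition Ltot :: "nat \<Rightarrow> (nat \<Rightarrow> nat) \<Rightarrow> (nat \<Rightarrow> nat \<Rightarrow> nat) \<Rightarrow> (nat \<Rightarrow> nat \<Rightarrow> nat \<Rightarrow> real) \<Rightarrow> (nat \<Rightarrow> nat \<Rightarrow> real)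
    \<Rightarrow> (nat \<Rightarrow> real) \<Rightarrow> nat \<Rightarrow> nat \<Rightarrow> real" where
  "Ltot M N k adj c a i j = (\<Sum>l\<in>{1..M}. Llayer N k adj c a l i j)"

definition hier_system :: "nat \<Rightarrow> (nat \<Rightarrow> nat) \<Rightarrow> (nat \<Rightarrow> nat \<Rightarrow> nat) \<Rightarrow> (nat \<Rightarrow> nat \<Rightarrow> nat \<Rightarrow> real)
    \<Rightarrow> (nat \<Rightarrow> nat \<Rightarrow> real) \<Rightarrow> (nat \<Rightarrow> real) \<Rightarrow> bool" where
  "hier_system M N k adj c a \<longleftrightarrow>
     2 \<le> M \<and> N (Suc M) = 1 \<and>
     (\<forall>l\<in>{1..M}. 0 < N l) \<and>
     (\<forall>l\<in>{1..M}. (\<forall>p<N (Suc l). 1 \<le> k l p) \<and> (\<Sum>p<N (Suc l). k l p) = N l) \<and>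
     (\<forall>l\<in>{1..M}. \<forall>i j. (adj l i j = 0 \<or> adj l i j = 1) \<and> adj l i j = adj l j i \<and> adj l i i = 0 \<and>
        (adj l i j \<noteq> 0 \<longrightarrow> (\<exists>p<N (Suc l). ingrp k l p i \<and> ingrp k l p j))) \<and>
     (\<forall>l\<in>{1..M}. \<forall>p<N (Suc l). \<forall>i j. ingrp k l p i \<and> ingrp k l p j \<longrightarrow>
        (\<lambda>u v. adj l u v = 1)\<^sup>*\<^sup>* i j) \<and>
     (\<forall>l\<in>{1..M-1}. (\<forall>i<N l. 0 \<le> c l i) \<and>
        (\<forall>p<N (Suc l). (\<Sum>i\<in>{off k l p..<off k l (Suc p)}. c l i) = 1)) \<and>
     (\<forall>i<N 1. 0 < a i)"

end

theory Submission
  imports Defs "HOL-Analysis.Analysis"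
begin


lemma off_mono: "p \<le> p' \<Longrightarrow> off k l p \<le> off k l p'"
  unfolding off_def by (rule sum_mono2) auto

lemma off_Suc: "off k l (Suc p) = off k l p + k l p"
  unfolding off_def by simp

lemma ingrp_unique: "ingrp k l p q \<Longrightarrow> ingrp k l p' q \<Longrightarrow> p = p'"
proof (rule ccontr)
  assume a: "ingrp k l p q" "ingrp k l p' q" "p \<noteq> p'"
  { fix u v assume "ingrp k l u q" "ingrp k l v q" "u < v"
    then have False using off_mono[of "Suc u" v k l] unfolding ingrp_def by auto }
  with a show False by (metis linorder_neqE_nat)
qed

locale hsys =
  fixes M :: nat and N :: "nat \<Rightarrow> nat" and k :: "nat \<Rightarrow> nat \<Rightarrow> nat"
    and adj :: "nat \<Rightarrow> nat \<Rightarrow> nat \<Rightarrow> real" and c :: "nat \<Rightarrow> nat \<Rightarrow> real" and a :: "nat \<Rightarrow> real"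
  assumes hs: "hier_system M N k adj c a"
begin

lemma M2: "2 \<le> M" and NM: "N (Suc M) = 1"
  and Npos: "1 \<le> l \<Longrightarrow> l \<le> M \<Longrightarrow> 0 < N l"
  and kpos: "1 \<le> l \<Longrightarrow> l \<le> M \<Longrightarrow> p < N (Suc l) \<Longrightarrow> 1 \<le> k l p"
  and ksum: "1 \<le> l \<Longrightarrow> l \<le> M \<Longrightarrow> (\<Sum>p<N (Suc l). k l p) = N l"
  and adj01: "1 \<le> l \<Longrightarrow> l \<le> M \<Longrightarrow> adj l i j = 0 \<or> adj l i j = 1"
  and adjsym: "1 \<le> l \<Longrightarrow> l \<le> M \<Longrightarrow> adj l i j = adj l j i"
  and adjgrp: "1 \<le> l \<Longrightarrow> l \<le> M \<Longrightarrow> adj l i j \<noteq> 0 \<Longrightarrow> \<exists>p<N (Suc l). ingrp k l p i \<and> ingrp k l p j"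
  and conn: "1 \<le> l \<Longrightarrow> l \<le> M \<Longrightarrow> p < N (Suc l) \<Longrightarrow> ingrp k l p i \<Longrightarrow> ingrp k l p j \<Longrightarrow>
        (\<lambda>u v. adj l u v = 1)\<^sup>*\<^sup>* i j"
  and csum: "1 \<le> l \<Longrightarrow> l \<le> M - 1 \<Longrightarrow> p < N (Suc l) \<Longrightarrow> (\<Sum>i\<in>{off k l p..<off k l (Suc p)}. c l i) = 1"
  and apos: "i < N 1 \<Longrightarrow> 0 < a i"
  using hs unfolding hier_system_def by auto

lemma NSpos: "1 \<le> l \<Longrightarrow> l \<le> M \<Longrightarrow> 0 < N (Suc l)"
  using Npos[of "Suc l"] NM by (cases "l = M") auto

lemma off_N: "1 \<le> l \<Longrightarrow> l \<le> M \<Longrightarrow> off k l (N (Suc l)) = N l"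
  using ksum unfolding off_def by simp

lemma ingrp_range: "1 \<le> l \<Longrightarrow> l \<le> M \<Longrightarrow> p < N (Suc l) \<Longrightarrow> ingrp k l p q \<Longrightarrow> q < N l"
  using off_mono[of "Suc p" "N (Suc l)" k l] off_N unfolding ingrp_def by auto

definition grp :: "nat \<Rightarrow> nat \<Rightarrow> nat" where
  "grp l q = (LEAST p. q < off k l (Suc p))"

lemma grp_eq: "ingrp k l p q \<Longrightarrow> grp l q = p"
  unfolding grp_def
proof (rule Least_equality)
  assume "ingrp k l p q" then show "q < off k l (Suc p)" by (simp add: ingrp_def)
next
  fix y assume h: "ingrp k l p q" "q < off k l (Suc y)"
  show "p \<le> y"
  proof (rule ccontr)
    assume "\<not> p \<le> y"
    then have "off k l (Suc y) \<le> off k l p" by (intro off_mono) auto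
    with h show False by (auto simp: ingrp_def)
  qed
qed

lemma grp_props: assumes "1 \<le> l" "l \<le> M" "q < N l"
  shows "grp l q < N (Suc l)" "ingrp k l (grp l q) q"
proof -
  let ?P = "\<lambda>p. q < off k l (Suc p)"
  have n: "0 < N (Suc l)" using NSpos assms by auto
  have P1: "?P (N (Suc l) - 1)" using off_N assms n by simp
  then have le: "grp l q \<le> N (Suc l) - 1" unfolding grp_def by (rule Least_le)
  then show "grp l q < N (Suc l)" using n by linarith
  have Pg: "?P (grp l q)" unfolding grp_def using P1 by (rule LeastI)
  have "off k l (grp l q) \<le> q"
  proof (cases "grp l q")
    case 0 then show ?thesis by (simp add: off_def)
  next
    case (Suc p)
    then have "p < grp l q" by simp
    then have "\<not> ?P p" unfolding grp_def by (rule not_less_Least)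
    then show ?thesis using Suc by simp
  qed
  with Pg show "ingrp k l (grp l q) q" by (simp add: ingrp_def)
qed

lemma ingrp_iff: "1 \<le> l \<Longrightarrow> l \<le> M \<Longrightarrow> q < N l \<Longrightarrow> ingrp k l p q \<longleftrightarrow> grp l q = p"
  using grp_eq grp_props by blast

lemma G_mem: "q \<in> {off k l p..<off k l (Suc p)} \<longleftrightarrow> ingrp k l p q"
  by (simp add: ingrp_def)

lemma G_sub: "1 \<le> l \<Longrightarrow> l \<le> M \<Longrightarrow> p < N (Suc l) \<Longrightarrow> {off k l p..<off k l (Suc p)} \<subseteq> {..<N l}"
  using ingrp_range G_mem by blast

lemma G_ne: "1 \<le> l \<Longrightarrow> l \<le> M \<Longrightarrow> p < N (Suc l) \<Longrightarrow> off k l p \<in> {off k l p..<off k l (Suc p)}"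
  using kpos[of l p] by (simp add: off_Suc)

fun up :: "nat \<Rightarrow> nat \<Rightarrow> nat \<Rightarrow> nat" where
  "up l 0 q = q"
| "up l (Suc d) q = up (Suc l) d (grp l q)"

lemma up_Suc: "up l (Suc d) q = grp (l + d) (up l d q)"
  by (induction d arbitrary: l q) auto

lemma up_range: "1 \<le> l \<Longrightarrow> l + d \<le> Suc M \<Longrightarrow> q < N l \<Longrightarrow> up l d q < N (l + d)"
proof (induction d arbitrary: l q)
  case 0 then show ?case by simp
next
  case (Suc d)
  have "grp l q < N (Suc l)" using grp_props Suc.prems by auto
  then show ?case using Suc.IH[of "Suc l" "grp l q"] Suc.prems by simp
qed

lemma aw_Suc: "1 \<le> l \<Longrightarrow> aw k a (Suc l) p = (\<Sum>q\<in>{off k l p..<off k l (Suc p)}. aw k a l q)"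
  by (cases l) auto

lemma aw_pos: "1 \<le> l \<Longrightarrow> l \<le> Suc M \<Longrightarrow> q < N l \<Longrightarrow> 0 < aw k a l q"
proof (induction l arbitrary: q rule: nat_induct_at_least)
  case base then show ?case using apos by simp
next
  case (Suc l)
  have "0 < (\<Sum>r\<in>{off k l q..<off k l (Suc q)}. aw k a l r)"
  proof (rule sum_pos2[where i="off k l q"])
    show "off k l q \<in> {off k l q..<off k l (Suc q)}" using G_ne Suc by auto
    have "off k l q < N l" using Suc G_ne[of l q] G_sub[of l q] by auto
    then show "0 < aw k a l (off k l q)" using Suc by auto
    fix r assume "r \<in> {off k l q..<off k l (Suc q)}"
    then have "r < N l" using Suc G_sub[of l q] by auto
    then show "0 \<le> aw k a l r" using Suc by (auto intro: less_imp_le)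
  qed auto
  then show ?case using aw_Suc Suc by simp
qed

fun Y :: "(nat \<Rightarrow> real) \<Rightarrow> nat \<Rightarrow> nat \<Rightarrow> real" where
  "Y f 0 q = 0"
| "Y f (Suc 0) q = f q"
| "Y f (Suc (Suc l)) p = (\<Sum>q\<in>{off k (Suc l) p..<off k (Suc l) (Suc p)}. aw k a (Suc l) q * Y f (Suc l) q)
      / aw k a (Suc (Suc l)) p"

fun Z :: "(nat \<Rightarrow> real) \<Rightarrow> nat \<Rightarrow> nat \<Rightarrow> real" where
  "Z f 0 q = 0"
| "Z f (Suc 0) q = f q"
| "Z f (Suc (Suc l)) p = (\<Sum>q\<in>{off k (Suc l) p..<off k (Suc l) (Suc p)}. c (Suc l) q * Z f (Suc l) q)"

lemma Y_Suc: "1 \<le> l \<Longrightarrow> Y f (Suc l) p =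
   (\<Sum>q\<in>{off k l p..<off k l (Suc p)}. aw k a l q * Y f l q) / aw k a (Suc l) p"
  by (cases l) auto

lemma Z_Suc: "1 \<le> l \<Longrightarrow> Z f (Suc l) p = (\<Sum>q\<in>{off k l p..<off k l (Suc p)}. c l q * Z f l q)"
  by (cases l) auto

lemma Y_neg: "Y (\<lambda>i. - f i) l q = - Y f l q"
  by (induction f l q rule: Y.induct) (simp_all add: sum_negf)

lemma Y_sum: "finite S \<Longrightarrow> Y (\<lambda>i. \<Sum>m\<in>S. F m i) l q = (\<Sum>m\<in>S. Y (F m) l q)"
proof (induction "\<lambda>i. \<Sum>m\<in>S. F m i" l q rule: Y.induct)
  case (3 l p)
  then show ?case
    by (simp add: sum_distrib_left sum_divide_distrib[symmetric] sum.swap[of _ S])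
qed simp_all

lemma Y_cong: "1 \<le> l \<Longrightarrow> (\<And>i. i < N 1 \<Longrightarrow> f i = g i) \<Longrightarrow> l \<le> Suc M \<Longrightarrow> q < N l \<Longrightarrow> Y f l q = Y g l q"
proof (induction l arbitrary: q rule: nat_induct_at_least)
  case base then show ?case by simp
next
  case (Suc l)
  have "\<And>r. r \<in> {off k l q..<off k l (Suc q)} \<Longrightarrow> Y f l r = Y g l r"
    using Suc G_sub[of l q] by auto
  then show ?case using Suc by (simp add: Y_Suc)
qed

lemma Y_up: "1 \<le> l \<Longrightarrow> l \<le> m \<Longrightarrow> m \<le> Suc M \<Longrightarrow> q < N l \<Longrightarrow>
    Y (\<lambda>i. g (up 1 (m - 1) i)) l q = g (up l (m - l) q)"
proof (induction l arbitrary: q rule: nat_induct_at_least)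
  case base then show ?case by simp
next
  case (Suc l)
  have lM: "l \<le> M" using Suc by simp
  have d: "m - l = Suc (m - Suc l)" using Suc by simp
  have h: "\<And>r. r \<in> {off k l q..<off k l (Suc q)} \<Longrightarrow>
      aw k a l r * Y (\<lambda>i. g (up 1 (m - 1) i)) l r = aw k a l r * g (up (Suc l) (m - Suc l) q)"
  proof -
    fix r assume r: "r \<in> {off k l q..<off k l (Suc q)}"
    then have rN: "r < N l" using G_sub[of l q] Suc lM by auto
    have "grp l r = q" using r G_mem grp_eq by blast
    then show "aw k a l r * Y (\<lambda>i. g (up 1 (m - 1) i)) l r = aw k a l r * g (up (Suc l) (m - Suc l) q)"
      using Suc.IH[of r] Suc rN d by simp
  qed
  have "(\<Sum>r\<in>{off k l q..<off k l (Suc q)}. aw k a l r * Y (\<lambda>i. g (up 1 (m - 1) i)) l r)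
     = (\<Sum>r\<in>{off k l q..<off k l (Suc q)}. aw k a l r * g (up (Suc l) (m - Suc l) q))"
    by (rule sum.cong[OF refl h])
  then have "Y (\<lambda>i. g (up 1 (m - 1) i)) (Suc l) q =
     (\<Sum>r\<in>{off k l q..<off k l (Suc q)}. aw k a l r) * g (up (Suc l) (m - Suc l) q) / aw k a (Suc l) q"
    using Suc by (simp only: Y_Suc sum_distrib_right)
  also have "\<dots> = g (up (Suc l) (m - Suc l) q)"
    using aw_Suc[of l q] aw_pos[of "Suc l" q] Suc by simp
  finally show ?case .
qed

lemma Y_deriv: "1 \<le> l \<Longrightarrow> (\<And>i. i < N 1 \<Longrightarrow> ((\<lambda>s. X s i) has_real_derivative DX i) (at t within S)) \<Longrightarrow> l \<le> Suc M \<Longrightarrow> q < N l \<Longrightarrow>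
   ((\<lambda>s. Y (X s) l q) has_real_derivative Y DX l q) (at t within S)"
proof (induction l arbitrary: q rule: nat_induct_at_least)
  case base then show ?case by simp
next
  case (Suc l)
  have h: "\<And>r. r \<in> {off k l q..<off k l (Suc q)} \<Longrightarrow> ((\<lambda>s. Y (X s) l r) has_real_derivative Y DX l r) (at t within S)"
    using Suc G_sub[of l q] by auto
  have "((\<lambda>s. (\<Sum>r\<in>{off k l q..<off k l (Suc q)}. aw k a l r * Y (X s) l r))
     has_real_derivative (\<Sum>r\<in>{off k l q..<off k l (Suc q)}. aw k a l r * Y DX l r)) (at t within S)"
    by (rule DERIV_sum, rule DERIV_cmult, rule h)
  then have "((\<lambda>s. (\<Sum>r\<in>{off k l q..<off k l (Suc q)}. aw k a l r * Y (X s) l r) / aw k a (Suc l) q)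
     has_real_derivative (\<Sum>r\<in>{off k l q..<off k l (Suc q)}. aw k a l r * Y DX l r) / aw k a (Suc l) q) (at t within S)"
    by (rule DERIV_cdivide)
  then show ?case using Suc by (simp add: Y_Suc)
qed

end



lemma sym_sum_quad:
  fixes w :: "nat \<Rightarrow> nat \<Rightarrow> real"
  assumes sym: "\<And>r s. r \<in> A \<Longrightarrow> s \<in> A \<Longrightarrow> w r s = w s r"
  shows "(\<Sum>r\<in>A. \<Sum>s\<in>A. w r s * u r * (v r - v s)) = (1/2) * (\<Sum>r\<in>A. \<Sum>s\<in>A. w r s * (u r - u s) * (v r - v s))"
proof -
  let ?T = "(\<Sum>r\<in>A. \<Sum>s\<in>A. w r s * u r * (v r - v s))"
  have "?T = (\<Sum>s\<in>A. \<Sum>r\<in>A. w r s * u r * (v r - v s))" by (rule sum.swap)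
  also have "\<dots> = (\<Sum>r\<in>A. \<Sum>s\<in>A. - (w r s * u s * (v r - v s)))"
    by (intro sum.cong refl) (simp add: sym algebra_simps)
  finally have e: "?T = (\<Sum>r\<in>A. \<Sum>s\<in>A. - (w r s * u s * (v r - v s)))" .
  have "?T + ?T = (\<Sum>r\<in>A. \<Sum>s\<in>A. w r s * u r * (v r - v s)) + (\<Sum>r\<in>A. \<Sum>s\<in>A. - (w r s * u s * (v r - v s)))"
    using e by simp
  also have "\<dots> = (\<Sum>r\<in>A. \<Sum>s\<in>A. w r s * (u r - u s) * (v r - v s))"
    by (simp add: sum.distrib[symmetric] algebra_simps)
  finally show ?thesis by simp
qed

lemma delta_mult: assumes "finite S" shows "(\<Sum>j\<in>S. (if r = j then 1 else 0) * (f j::real)) = (if r \<in> S then f r else 0)"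
proof -
  have "(\<Sum>j\<in>S. (if r = j then 1 else 0) * f j) = (\<Sum>j\<in>S. if r = j then f j else 0)"
    by (intro sum.cong refl) simp
  then show ?thesis using assms by (simp add: sum.delta)
qed

lemma sym_sum_zero:
  fixes w :: "nat \<Rightarrow> nat \<Rightarrow> real"
  assumes sym: "\<And>r s. r \<in> A \<Longrightarrow> s \<in> A \<Longrightarrow> w r s = w s r"
  shows "(\<Sum>r\<in>A. \<Sum>s\<in>A. w r s * (v r - v s)) = 0"
  using sym_sum_quad[of A w "\<lambda>_. 1" v] sym by simp

context hsys begin

definition hL :: "(nat \<Rightarrow> real) \<Rightarrow> nat \<Rightarrow> nat \<Rightarrow> real" where
  "hL f l r = (\<Sum>s<N l. LD N adj l r s * Z f l s) / aw k a l r"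

lemma LD_form: "q < N l \<Longrightarrow> (\<Sum>s<N l. LD N adj l q s * v s) = (\<Sum>s<N l. adj l q s * (v q - v s))"
proof -
  assume q: "q < N l"
  have "(\<Sum>s<N l. LD N adj l q s * v s) = (\<Sum>s<N l. (if q = s then 1 else 0) * ((\<Sum>m<N l. adj l q m) * v s) - adj l q s * v s)"
    by (intro sum.cong refl) (simp add: LD_def algebra_simps)
  also have "\<dots> = (\<Sum>m<N l. adj l q m) * v q - (\<Sum>s<N l. adj l q s * v s)"
    using q by (simp add: sum_subtractf delta_mult)
  also have "\<dots> = (\<Sum>s<N l. adj l q s * (v q - v s))"
    by (simp add: sum_distrib_right right_diff_distrib sum_subtractf)
  finally show ?thesis .
qed

lemma adj_out: assumes "1 \<le> l" "l \<le> M" "ingrp k l p r" "\<not> ingrp k l p s" shows "adj l r s = 0"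
proof (rule ccontr)
  assume "adj l r s \<noteq> 0"
  then obtain p' where "ingrp k l p' r" "ingrp k l p' s" using adjgrp assms by blast
  then show False using ingrp_unique assms by blast
qed

lemma grp_lap: assumes "1 \<le> l" "l \<le> M" "p < N (Suc l)"
  shows "(\<Sum>r\<in>{off k l p..<off k l (Suc p)}. \<Sum>s<N l. LD N adj l r s * v s) = 0"
proof -
  let ?G = "{off k l p..<off k l (Suc p)}"
  have sub: "?G \<subseteq> {..<N l}" using G_sub assms by auto
  have "(\<Sum>r\<in>?G. \<Sum>s<N l. LD N adj l r s * v s) = (\<Sum>r\<in>?G. \<Sum>s\<in>?G. adj l r s * (v r - v s))"
  proof (rule sum.cong[OF refl])
    fix r assume r: "r \<in> ?G"
    then have "(\<Sum>s<N l. LD N adj l r s * v s) = (\<Sum>s<N l. adj l r s * (v r - v s))"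
      using sub by (intro LD_form) auto
    also have "\<dots> = (\<Sum>s\<in>?G. adj l r s * (v r - v s))"
      by (rule sum.mono_neutral_right) (use sub r adj_out assms G_mem in auto)
    finally show "(\<Sum>s<N l. LD N adj l r s * v s) = (\<Sum>s\<in>?G. adj l r s * (v r - v s))" .
  qed
  also have "\<dots> = 0" by (rule sym_sum_zero) (use adjsym assms in auto)
  finally show ?thesis .
qed

lemma Bprod_Suc: "1 \<le> l \<Longrightarrow> Bprod N k (Suc l) = mmult (N l) (Bprod N k l) (Bmat k l)"
  by (cases l) auto

lemma Cprod_Suc: "1 \<le> l \<Longrightarrow> Cprod N k c (Suc l) = mmult (N l) (Cmat k c l) (Cprod N k c l)"
  by (cases l) auto

lemma Bprod_eq: "1 \<le> l \<Longrightarrow> l \<le> M \<Longrightarrow> i < N 1 \<Longrightarrow> Bprod N k l i q = (if up 1 (l - 1) i = q then 1 else 0)"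
proof (induction l arbitrary: q rule: nat_induct_at_least)
  case base then show ?case by (simp add: idm_def)
next
  case (Suc l)
  have u: "up 1 (l - 1) i < N l" using up_range[of 1 "l - 1" i] Suc by simp
  have "Bprod N k (Suc l) i q = (\<Sum>m<N l. (if up 1 (l - 1) i = m then 1 else 0) * Bmat k l m q)"
    using Suc by (simp add: Bprod_Suc mmult_def)
  also have "\<dots> = Bmat k l (up 1 (l - 1) i) q"
    using u by (simp add: delta_mult)
  also have "\<dots> = (if grp l (up 1 (l - 1) i) = q then 1 else 0)"
    using ingrp_iff[of l "up 1 (l - 1) i" q] u Suc by (simp add: Bmat_def)
  also have "grp l (up 1 (l - 1) i) = up 1 (Suc l - 1) i"
    using up_Suc[of 1 "l - 1" i] Suc by simp
  finally show ?case .
qed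

lemma Cprod_eq: "1 \<le> l \<Longrightarrow> l \<le> M \<Longrightarrow> r < N l \<Longrightarrow> (\<Sum>j<N 1. Cprod N k c l r j * f j) = Z f l r"
proof (induction l arbitrary: r rule: nat_induct_at_least)
  case base then show ?case by (simp add: idm_def delta_mult)
next
  case (Suc l)
  let ?G = "{off k l r..<off k l (Suc r)}"
  have "(\<Sum>j<N 1. Cprod N k c (Suc l) r j * f j) = (\<Sum>j<N 1. \<Sum>m<N l. Cmat k c l r m * Cprod N k c l m j * f j)"
    using Suc by (simp add: Cprod_Suc mmult_def sum_distrib_right)
  also have "\<dots> = (\<Sum>m<N l. Cmat k c l r m * (\<Sum>j<N 1. Cprod N k c l m j * f j))"
    by (subst sum.swap) (simp add: sum_distrib_left mult.assoc)
  also have "\<dots> = (\<Sum>m<N l. Cmat k c l r m * Z f l m)"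
    using Suc by simp
  also have "\<dots> = (\<Sum>m<N l. if m \<in> ?G then c l m * Z f l m else 0)"
    by (intro sum.cong refl) (simp add: Cmat_def ingrp_def)
  also have "\<dots> = sum (\<lambda>m. c l m * Z f l m) {m\<in>{..<N l}. m \<in> ?G}"
    by (rule sum.inter_filter[symmetric]) simp
  also have "\<dots> = (\<Sum>m\<in>?G. c l m * Z f l m)"
  proof -
    have "{m\<in>{..<N l}. m \<in> ?G} = ?G" using G_sub[of l r] Suc by auto
    then show ?thesis by simp
  qed
  also have "\<dots> = Z f (Suc l) r" using Suc by (simp add: Z_Suc)
  finally show ?case .
qed

lemma Llayer_eq: assumes "1 \<le> l" "l \<le> M" "i < N 1"
  shows "(\<Sum>j<N 1. Llayer N k adj c a l i j * f j) = hL f l (up 1 (l - 1) i)"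
proof -
  let ?u = "up 1 (l - 1) i"
  have u: "?u < N l" using up_range[of 1 "l - 1" i] assms by simp
  have B: "(\<Sum>q<N l. Bprod N k l i q * KLD N k adj a l q r) = KLD N k adj a l ?u r" for r
    using u assms by (simp add: Bprod_eq delta_mult)
  have "(\<Sum>j<N 1. Llayer N k adj c a l i j * f j) = (\<Sum>j<N 1. \<Sum>r<N l. KLD N k adj a l ?u r * Cprod N k c l r j * f j)"
    by (simp add: Llayer_def mmult_def B sum_distrib_right)
  also have "\<dots> = (\<Sum>r<N l. KLD N k adj a l ?u r * (\<Sum>j<N 1. Cprod N k c l r j * f j))"
    by (subst sum.swap) (simp add: sum_distrib_left mult.assoc)
  also have "\<dots> = (\<Sum>r<N l. KLD N k adj a l ?u r * Z f l r)"
  proof (intro sum.cong refl)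
    fix r assume "r \<in> {..<N l}"
    then show "KLD N k adj a l ?u r * (\<Sum>j<N 1. Cprod N k c l r j * f j) = KLD N k adj a l ?u r * Z f l r"
      using Cprod_eq[OF assms(1,2), of r f] by simp
  qed
  also have "\<dots> = hL f l ?u"
    by (simp add: hL_def KLD_def sum_divide_distrib)
  finally show ?thesis .
qed

lemma Ltot_eq: assumes "i < N 1"
  shows "(\<Sum>j<N 1. Ltot M N k adj c a i j * f j) = (\<Sum>l\<in>{1..M}. hL f l (up 1 (l - 1) i))"
proof -
  have "(\<Sum>j<N 1. Ltot M N k adj c a i j * f j) = (\<Sum>l\<in>{1..M}. \<Sum>j<N 1. Llayer N k adj c a l i j * f j)"
    by (simp add: Ltot_def sum_distrib_right) (rule sum.swap)
  also have "\<dots> = (\<Sum>l\<in>{1..M}. hL f l (up 1 (l - 1) i))"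
  proof (intro sum.cong refl)
    fix l assume "l \<in> {1..M}"
    then show "(\<Sum>j<N 1. Llayer N k adj c a l i j * f j) = hL f l (up 1 (l - 1) i)"
      using Llayer_eq[of l i f] assms by simp
  qed
  finally show ?thesis .
qed

lemma Y_zero: assumes "Suc m \<le> l" "1 \<le> m" "m \<le> M" "l \<le> Suc M" "q < N l"
  shows "Y (\<lambda>i. hL f m (up 1 (m - 1) i)) l q = 0"
  using assms
proof (induction l arbitrary: q rule: nat_induct_at_least)
  case base
  let ?G = "{off k m q..<off k m (Suc q)}"
  have "Y (\<lambda>i. hL f m (up 1 (m - 1) i)) (Suc m) q =
      (\<Sum>r\<in>?G. aw k a m r * Y (\<lambda>i. hL f m (up 1 (m - 1) i)) m r) / aw k a (Suc m) q"
    using base by (simp add: Y_Suc)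
  also have "\<dots> = (\<Sum>r\<in>?G. \<Sum>s<N m. LD N adj m r s * Z f m s) / aw k a (Suc m) q"
  proof -
    have "aw k a m r * Y (\<lambda>i. hL f m (up 1 (m - 1) i)) m r = (\<Sum>s<N m. LD N adj m r s * Z f m s)"
      if r: "r \<in> ?G" for r
    proof -
      have rN: "r < N m" using r G_sub[of m q] base by auto
      have "Y (\<lambda>i. hL f m (up 1 (m - 1) i)) m r = hL f m r"
        using Y_up[of m m r "hL f m"] rN base by simp
      then show ?thesis using aw_pos[of m r] rN base by (simp add: hL_def)
    qed
    then show ?thesis by simp
  qed
  also have "\<dots> = 0" using grp_lap[of m q] base by simp
  finally show ?case .
next
  case (Suc l)
  have "\<And>r. r \<in> {off k l q..<off k l (Suc q)} \<Longrightarrow> Y (\<lambda>i. hL f m (up 1 (m - 1) i)) l r = 0"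
    using Suc G_sub[of l q] by auto
  then show ?case using Suc by (simp add: Y_Suc)
qed

lemma Y_Ltot: assumes "1 \<le> l" "l \<le> Suc M" "q < N l"
  shows "Y (\<lambda>i. \<Sum>j<N 1. Ltot M N k adj c a i j * f j) l q = (\<Sum>m\<in>{l..M}. hL f m (up l (m - l) q))"
proof -
  have "Y (\<lambda>i. \<Sum>j<N 1. Ltot M N k adj c a i j * f j) l q = Y (\<lambda>i. \<Sum>m\<in>{1..M}. hL f m (up 1 (m - 1) i)) l q"
    by (rule Y_cong[OF assms(1) Ltot_eq assms(2,3)])
  also have "\<dots> = (\<Sum>m\<in>{1..M}. Y (\<lambda>i. hL f m (up 1 (m - 1) i)) l q)"
    by (simp add: Y_sum)
  also have "\<dots> = (\<Sum>m\<in>{1..M}. if l \<le> m then hL f m (up l (m - l) q) else 0)"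
  proof (intro sum.cong refl)
    fix m assume m: "m \<in> {1..M}"
    show "Y (\<lambda>i. hL f m (up 1 (m - 1) i)) l q = (if l \<le> m then hL f m (up l (m - l) q) else 0)"
      using Y_up[of l m q "hL f m"] Y_zero[of m l q f] assms m by auto
  qed
  also have "\<dots> = (\<Sum>m\<in>{l..M}. hL f m (up l (m - l) q))"
  proof -
    have "{m \<in> {1..M}. l \<le> m} = {l..M}" using assms by auto
    then show ?thesis by (simp add: sum.inter_filter[symmetric])
  qed
  finally show ?thesis .
qed

lemma Y_Ltot_diff: assumes "1 \<le> l" "l \<le> M" "q < N l"
  shows "Y (\<lambda>i. \<Sum>j<N 1. Ltot M N k adj c a i j * f j) l q
       - Y (\<lambda>i. \<Sum>j<N 1. Ltot M N k adj c a i j * f j) (Suc l) (grp l q) = hL f l q"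
proof -
  have g: "grp l q < N (Suc l)" using grp_props assms by auto
  have "{l..M} = insert l {Suc l..M}" using assms by auto
  then have "(\<Sum>m\<in>{l..M}. hL f m (up l (m - l) q)) = hL f l q + (\<Sum>m\<in>{Suc l..M}. hL f m (up l (m - l) q))"
    by simp
  also have "(\<Sum>m\<in>{Suc l..M}. hL f m (up l (m - l) q)) = (\<Sum>m\<in>{Suc l..M}. hL f m (up (Suc l) (m - Suc l) (grp l q)))"
  proof (intro sum.cong refl)
    fix m assume "m \<in> {Suc l..M}"
    then have "m - l = Suc (m - Suc l)" by auto
    then show "hL f m (up l (m - l) q) = hL f m (up (Suc l) (m - Suc l) (grp l q))" by simp
  qed
  finally show ?thesis using Y_Ltot[of l q f] Y_Ltot[of "Suc l" "grp l q" f] assms g by simp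
qed

end



lemma exp_decay_lim: "(0::real) < \<kappa> \<Longrightarrow> ((\<lambda>t. exp (\<kappa> * (T - t)) * B) \<longlongrightarrow> 0) at_top"
proof -
  assume k: "0 < \<kappa>"
  have "filterlim (\<lambda>t. \<kappa> * (T - t)) at_bot at_top"
  proof -
    have "filterlim (\<lambda>t. \<kappa> * t) at_top at_top"
      by (rule filterlim_tendsto_pos_mult_at_top[OF tendsto_const k filterlim_ident])
    then have "filterlim (\<lambda>t. - \<kappa> * T + \<kappa> * t) at_top at_top"
      by (rule filterlim_tendsto_add_at_top[OF tendsto_const])
    then have "filterlim (\<lambda>t. - (- \<kappa> * T + \<kappa> * t)) at_bot at_top"
      by (simp only: filterlim_uminus_at_top[symmetric])
    then show ?thesis by (simp add: algebra_simps)
  qed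
  then have "((\<lambda>t. exp (\<kappa> * (T - t))) \<longlongrightarrow> 0) at_top"
    by (rule filterlim_compose[OF exp_at_bot])
  then show ?thesis by (auto intro: tendsto_mult_left_zero)
qed

lemma ode_decay:
  fixes V V' h :: "real \<Rightarrow> real" and \<kappa> :: real
  assumes der: "\<And>t. 0 \<le> t \<Longrightarrow> (V has_real_derivative V' t) (at t within {0..})"
    and ineq: "\<And>t. 0 \<le> t \<Longrightarrow> V' t \<le> - \<kappa> * V t + h t"
    and k: "0 < \<kappa>" and h: "(h \<longlongrightarrow> 0) at_top" and nn: "\<And>t. 0 \<le> t \<Longrightarrow> 0 \<le> V t"
  shows "(V \<longlongrightarrow> 0) at_top"
proof (rule tendstoI)
  fix \<epsilon> :: real assume e: "0 < \<epsilon>"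
  have "\<forall>\<^sub>F t in at_top. h t < \<kappa> * \<epsilon> / 2"
    by (rule order_tendstoD(2)[OF h]) (use e k in simp)
  then obtain T0 where T0: "\<And>t. t \<ge> T0 \<Longrightarrow> h t < \<kappa> * \<epsilon> / 2"
    by (auto simp: eventually_at_top_linorder)
  define T where "T = max 1 T0"
  have T1: "T \<ge> 1" and T0': "T \<ge> T0" by (auto simp: T_def)
  define \<phi> where "\<phi> t = exp (\<kappa> * t) * (V t - \<epsilon> / 2)" for t
  have mono: "\<phi> t \<le> \<phi> T" if t: "t \<ge> T" for t
  proof (rule DERIV_nonpos_imp_nonincreasing[OF t])
    fix s assume s: "T \<le> s" "s \<le> t"
    then have s0: "0 < s" using T1 by simp
    have "at s within {0..} = at s"
      by (rule at_within_interior) (use s0 in simp)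
    then have dV: "(V has_real_derivative V' s) (at s)" using der[of s] s0 by simp
    have "(\<phi> has_real_derivative (exp (\<kappa> * s) * \<kappa>) * (V s - \<epsilon> / 2) + exp (\<kappa> * s) * V' s) (at s)"
    proof -
      have d1: "((\<lambda>s. exp (\<kappa> * s)) has_real_derivative exp (\<kappa> * s) * \<kappa>) (at s)"
        by (auto intro!: derivative_eq_intros)
      have d2: "((\<lambda>s. V s - \<epsilon> / 2) has_real_derivative V' s) (at s)"
        using dV by (auto intro!: derivative_eq_intros)
      show ?thesis unfolding \<phi>_def using DERIV_mult[OF d1 d2] by (simp add: algebra_simps)
    qed
    moreover have "(exp (\<kappa> * s) * \<kappa>) * (V s - \<epsilon> / 2) + exp (\<kappa> * s) * V' s \<le> 0"
    proof -
      have "V' s \<le> - \<kappa> * V s + h s" using ineq s0 by simp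
      moreover have "h s < \<kappa> * \<epsilon> / 2" using T0 s T0' by simp
      ultimately have "\<kappa> * (V s - \<epsilon> / 2) + V' s \<le> 0" by (simp add: algebra_simps)
      then have "exp (\<kappa> * s) * (\<kappa> * (V s - \<epsilon> / 2) + V' s) \<le> 0"
        by (simp add: mult_nonneg_nonpos)
      then show ?thesis by (simp add: algebra_simps)
    qed
    ultimately show "\<exists>y. (\<phi> has_real_derivative y) (at s) \<and> y \<le> 0" by blast
  qed
  have bound: "V t \<le> \<epsilon> / 2 + exp (\<kappa> * (T - t)) * V T" if t: "t \<ge> T" for t
  proof -
    have "exp (\<kappa> * t) * (V t - \<epsilon> / 2) \<le> exp (\<kappa> * T) * (V T - \<epsilon> / 2)"
      using mono[OF t] by (simp add: \<phi>_def)
    also have "\<dots> \<le> exp (\<kappa> * T) * V T" using e by simp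
    finally have "V t - \<epsilon> / 2 \<le> exp (\<kappa> * T) * V T / exp (\<kappa> * t)"
      by (simp add: field_simps)
    also have "exp (\<kappa> * T) * V T / exp (\<kappa> * t) = exp (\<kappa> * (T - t)) * V T"
      by (simp add: algebra_simps exp_diff)
    finally show ?thesis by simp
  qed
  have "\<forall>\<^sub>F t in at_top. exp (\<kappa> * (T - t)) * V T < \<epsilon> / 2"
    by (rule order_tendstoD(2)[OF exp_decay_lim[OF k, of T "V T"]]) (use e in simp)
  moreover have "\<forall>\<^sub>F t in at_top. t \<ge> T \<and> t \<ge> 0" using T1 by (auto simp: eventually_at_top_linorder intro!: exI[of _ T])
  ultimately show "\<forall>\<^sub>F t in at_top. dist (V t) 0 < \<epsilon>"
  proof eventually_elim
    case (elim t)
    then show ?case using bound[of t] nn[of t] by simp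
  qed
qed




lemma sq_tri: "((x::real) - z)^2 \<le> 2 * (x - y)^2 + 2 * (y - z)^2"
proof -
  have "0 \<le> ((x - y) - (y - z))^2" by simp
  then show ?thesis by (simp add: power2_eq_square algebra_simps)
qed

lemma finite_const:
  assumes "finite S" "\<forall>x\<in>S. \<exists>C\<ge>0. \<forall>u. F x u \<le> C * (G u::real)" "\<And>u. 0 \<le> G u"
  shows "\<exists>C\<ge>0. \<forall>x\<in>S. \<forall>u. F x u \<le> C * G u"
  using assms(1,2)
proof (induction S rule: finite_induct)
  case empty then show ?case by auto
next
  case (insert x S)
  then obtain C1 where C1: "C1 \<ge> 0" "\<forall>y\<in>S. \<forall>u. F y u \<le> C1 * G u" by auto
  obtain C2 where C2: "C2 \<ge> 0" "\<forall>u. F x u \<le> C2 * G u" using insert by auto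
  have "\<forall>y\<in>insert x S. \<forall>u. F y u \<le> (C1 + C2) * G u"
  proof (intro ballI allI)
    fix y u assume y: "y \<in> insert x S"
    have a1: "C1 * G u \<le> (C1 + C2) * G u" "C2 * G u \<le> (C1 + C2) * G u"
      using C1 C2 assms(3)[of u] by (auto intro: mult_right_mono)
    show "F y u \<le> (C1 + C2) * G u"
    proof (cases "y = x")
      case True then show ?thesis using C2 a1 by (metis order_trans)
    next
      case False then have "y \<in> S" using y by auto
      then show ?thesis using C1 a1 by (metis order_trans)
    qed
  qed
  then show ?case using C1 C2 by (intro exI[of _ "C1 + C2"]) auto
qed

context hsys begin

definition En :: "nat \<Rightarrow> (nat \<Rightarrow> real) \<Rightarrow> real" where
  "En l u = (1/2) * (\<Sum>q<N l. \<Sum>s<N l. adj l q s * (u q - u s)^2)"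

lemma adj_nn: "1 \<le> l \<Longrightarrow> l \<le> M \<Longrightarrow> 0 \<le> adj l i j"
  using adj01[of l i j] by auto

lemma En_nn: "1 \<le> l \<Longrightarrow> l \<le> M \<Longrightarrow> 0 \<le> En l u"
  unfolding En_def by (intro mult_nonneg_nonneg sum_nonneg) (auto simp: adj_nn)

lemma En_edge: assumes "1 \<le> l" "l \<le> M" "adj l r s = 1" shows "(u r - u s)^2 \<le> 2 * En l u"
proof -
  obtain p where p: "p < N (Suc l)" "ingrp k l p r" "ingrp k l p s" using adjgrp[of l r s] assms by auto
  then have rs: "r < N l" "s < N l" using ingrp_range assms by auto
  have "(u r - u s)^2 = adj l r s * (u r - u s)^2" using assms by simp
  also have "\<dots> \<le> (\<Sum>s'<N l. adj l r s' * (u r - u s')^2)"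
    by (rule member_le_sum) (use rs assms adj_nn in auto)
  also have "\<dots> \<le> (\<Sum>q<N l. \<Sum>s'<N l. adj l q s' * (u q - u s')^2)"
    by (rule member_le_sum[where f="\<lambda>q. \<Sum>s'<N l. adj l q s' * (u q - u s')^2"])
       (use rs assms adj_nn in \<open>auto intro!: sum_nonneg\<close>)
  finally show ?thesis by (simp add: En_def)
qed

lemma path_bound: assumes "1 \<le> l" "l \<le> M" "(\<lambda>u v. adj l u v = 1)\<^sup>*\<^sup>* q r"
  shows "\<exists>C\<ge>0. \<forall>u. (u q - u r)^2 \<le> C * En l u"
  using assms(3)
proof (induction rule: rtranclp_induct)
  case base then show ?case by (auto intro: exI[of _ 0])
next
  case (step y z)
  then obtain C where C: "C \<ge> 0" "\<forall>u. (u q - u y)^2 \<le> C * En l u" by auto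
  have "\<forall>u. (u q - u z)^2 \<le> (2 * C + 4) * En l u"
  proof
    fix u :: "nat \<Rightarrow> real"
    have "(u q - u z)^2 \<le> 2 * (u q - u y)^2 + 2 * (u y - u z)^2" by (rule sq_tri)
    also have "\<dots> \<le> 2 * (C * En l u) + 2 * (2 * En l u)"
      using C(2) En_edge[of l y z u] step assms by (intro add_mono) auto
    finally show "(u q - u z)^2 \<le> (2 * C + 4) * En l u" by (simp add: algebra_simps)
  qed
  then show ?case using C by (intro exI[of _ "2 * C + 4"]) auto
qed

lemma poincare: assumes l: "1 \<le> l" "l \<le> M"
  shows "\<exists>C>0. \<forall>u. (\<forall>p<N (Suc l). (\<Sum>q\<in>{off k l p..<off k l (Suc p)}. aw k a l q * u q) = 0) \<longrightarrow>
     (\<Sum>q<N l. aw k a l q * (u q)^2) \<le> C * En l u"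
proof -
  let ?S = "{(q, r). q < N l \<and> r < N l \<and> grp l q = grp l r}"
  have fin: "finite ?S" by (rule finite_subset[of _ "{..<N l} \<times> {..<N l}"]) auto
  have each: "\<forall>x\<in>?S. \<exists>C\<ge>0. \<forall>u. (\<lambda>x u. (u (fst x) - u (snd x))^2) x u \<le> C * En l u"
  proof
    fix x assume "x \<in> ?S"
    then obtain q r where x: "x = (q, r)" "q < N l" "r < N l" "grp l q = grp l r" by auto
    have "(\<lambda>u v. adj l u v = 1)\<^sup>*\<^sup>* q r"
      using conn[of l "grp l q" q r] grp_props[of l q] grp_props[of l r] x l by auto
    then show "\<exists>C\<ge>0. \<forall>u. (\<lambda>x u. (u (fst x) - u (snd x))^2) x u \<le> C * En l u"
      using path_bound l x by simp
  qed
  obtain C0 where C0: "C0 \<ge> 0" "\<forall>x\<in>?S. \<forall>u. (u (fst x) - u (snd x))^2 \<le> C0 * En l u"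
    using finite_const[OF fin each] En_nn l by auto
  define C where "C = (\<Sum>q<N l. aw k a l q) * C0 + 1"
  have awnn: "q < N l \<Longrightarrow> 0 \<le> aw k a l q" for q using aw_pos[of l q] l by auto
  have Cpos: "C > 0" unfolding C_def using C0 awnn by (auto intro!: add_nonneg_pos mult_nonneg_nonneg sum_nonneg)
  have "(\<Sum>q<N l. aw k a l q * (u q)^2) \<le> C * En l u"
    if zm: "\<forall>p<N (Suc l). (\<Sum>q\<in>{off k l p..<off k l (Suc p)}. aw k a l q * u q) = 0" for u
  proof -
    have E0: "0 \<le> En l u" using En_nn l by auto
    have sq: "(u q)^2 \<le> C0 * En l u" if q: "q < N l" for q
    proof -
      let ?p = "grp l q"
      let ?G = "{off k l ?p..<off k l (Suc ?p)}"
      let ?W = "aw k a (Suc l) ?p"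
      have p: "?p < N (Suc l)" "ingrp k l ?p q" using grp_props q l by auto
      have W: "?W = (\<Sum>r\<in>?G. aw k a l r)" using aw_Suc l by simp
      have Wpos: "?W > 0" using aw_pos[of "Suc l" ?p] p l by simp
      have Gsub: "?G \<subseteq> {..<N l}" using G_sub p l by auto
      have "(\<Sum>r\<in>?G. aw k a l r * (u q - u r)) = u q * ?W - (\<Sum>r\<in>?G. aw k a l r * u r)"
        by (simp add: W sum_distrib_left right_diff_distrib sum_subtractf algebra_simps)
      also have "(\<Sum>r\<in>?G. aw k a l r * u r) = 0" using zm p by auto
      finally have uq0: "u q * ?W = (\<Sum>r\<in>?G. aw k a l r * (u q - u r))" by simp
      define X where "X = (\<Sum>r\<in>?G. aw k a l r * (u q - u r))"
      have uq: "u q = X / ?W" using uq0 Wpos unfolding X_def[symmetric] by (simp add: field_simps)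
      have bnd: "\<bar>u q - u r\<bar> \<le> sqrt (C0 * En l u)" if r: "r \<in> ?G" for r
      proof -
        have "r < N l" "grp l r = ?p" using r Gsub grp_eq G_mem by auto
        then have "(q, r) \<in> ?S" using q by auto
        then have "(u q - u r)^2 \<le> C0 * En l u" using C0 by auto
        then show ?thesis by (intro real_le_rsqrt) simp
      qed
      have "\<bar>u q\<bar> \<le> (\<Sum>r\<in>?G. aw k a l r * \<bar>u q - u r\<bar>) / ?W"
      proof -
        have "\<bar>\<Sum>r\<in>?G. aw k a l r * (u q - u r)\<bar> \<le> (\<Sum>r\<in>?G. \<bar>aw k a l r * (u q - u r)\<bar>)"
          by (rule sum_abs)
        also have "\<dots> = (\<Sum>r\<in>?G. aw k a l r * \<bar>u q - u r\<bar>)"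
          using Gsub awnn by (intro sum.cong refl) (auto simp: abs_mult)
        finally have "\<bar>X\<bar> \<le> (\<Sum>r\<in>?G. aw k a l r * \<bar>u q - u r\<bar>)" unfolding X_def .
        moreover have "\<bar>u q\<bar> = \<bar>X\<bar> / ?W" using uq Wpos by (simp add: abs_divide)
        ultimately show ?thesis using Wpos by (simp add: divide_right_mono)
      qed
      also have "\<dots> \<le> (\<Sum>r\<in>?G. aw k a l r * sqrt (C0 * En l u)) / ?W"
        using Gsub awnn bnd Wpos by (intro divide_right_mono sum_mono mult_left_mono) auto
      also have "\<dots> = sqrt (C0 * En l u)"
        using W Wpos by (simp add: sum_distrib_right[symmetric])
      finally have "\<bar>u q\<bar> \<le> sqrt (C0 * En l u)" .
      then have "\<bar>u q\<bar>^2 \<le> (sqrt (C0 * En l u))^2" by (intro power_mono) auto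
      then show ?thesis using C0 E0 by simp
    qed
    have "(\<Sum>q<N l. aw k a l q * (u q)^2) \<le> (\<Sum>q<N l. aw k a l q * (C0 * En l u))"
      using sq awnn by (intro sum_mono mult_left_mono) auto
    also have "\<dots> = (\<Sum>q<N l. aw k a l q) * C0 * En l u" by (simp add: sum_distrib_right mult.assoc)
    also have "\<dots> \<le> C * En l u" unfolding C_def using E0 by (simp add: algebra_simps)
    finally show ?thesis .
  qed
  then show ?thesis using Cpos by blast
qed

end



lemma quad_aux: "0 \<le> (w::real) \<Longrightarrow> - (w * (a - b) * ((a + c) - (b + d))) \<le> w * (- (1/2) * (a - b)^2 + (1/2) * (c - d)^2)"
proof -
  assume w: "0 \<le> w"
  have "0 \<le> w * ((a-b)+(c-d))^2" using w by simp
  moreover have "w * (- (1/2) * (a - b)^2 + (1/2) * (c - d)^2) - (- (w * (a - b) * ((a + c) - (b + d)))) = (1/2) * (w * ((a-b)+(c-d))^2)"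
    by (simp add: power2_eq_square algebra_simps)
  ultimately show ?thesis by linarith
qed

locale hsol = hsys +
  fixes x :: "real \<Rightarrow> nat \<Rightarrow> real"
  assumes ode: "\<And>t i. 0 \<le> t \<Longrightarrow> i < N 1 \<Longrightarrow>
        ((\<lambda>s. x s i) has_real_derivative - (\<Sum>j<N 1. Ltot M N k adj c a i j * x t j)) (at t within {0..})"
begin

definition dd :: "nat \<Rightarrow> real \<Rightarrow> nat \<Rightarrow> real" where
  "dd l t q = Y (x t) l q - Y (x t) (Suc l) (grp l q)"

definition ee :: "nat \<Rightarrow> real \<Rightarrow> nat \<Rightarrow> real" where
  "ee l t q = Z (x t) l q - Y (x t) l q"

definition VV :: "nat \<Rightarrow> real \<Rightarrow> real" where
  "VV l t = (\<Sum>q<N l. aw k a l q * (dd l t q)^2)"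

lemma Yx_deriv: assumes "1 \<le> l" "l \<le> Suc M" "q < N l" "0 \<le> t"
  shows "((\<lambda>s. Y (x s) l q) has_real_derivative - Y (\<lambda>i. \<Sum>j<N 1. Ltot M N k adj c a i j * x t j) l q) (at t within {0..})"
proof -
  have "((\<lambda>s. Y (x s) l q) has_real_derivative Y (\<lambda>i. - (\<Sum>j<N 1. Ltot M N k adj c a i j * x t j)) l q) (at t within {0..})"
    by (rule Y_deriv[OF assms(1) ode[OF assms(4)] assms(2,3)])
  then show ?thesis by (simp add: Y_neg)
qed

lemma dd_deriv: assumes "1 \<le> l" "l \<le> M" "q < N l" "0 \<le> t"
  shows "((\<lambda>s. dd l s q) has_real_derivative - hL (x t) l q) (at t within {0..})"
proof -
  have g: "grp l q < N (Suc l)" using grp_props assms by auto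
  have "((\<lambda>s. dd l s q) has_real_derivative
     - Y (\<lambda>i. \<Sum>j<N 1. Ltot M N k adj c a i j * x t j) l q - - Y (\<lambda>i. \<Sum>j<N 1. Ltot M N k adj c a i j * x t j) (Suc l) (grp l q))
     (at t within {0..})"
    unfolding dd_def using assms g by (intro DERIV_diff Yx_deriv) auto
  moreover have "- Y (\<lambda>i. \<Sum>j<N 1. Ltot M N k adj c a i j * x t j) l q - - Y (\<lambda>i. \<Sum>j<N 1. Ltot M N k adj c a i j * x t j) (Suc l) (grp l q) = - hL (x t) l q"
    using Y_Ltot_diff[OF assms(1-3), of "x t"] by linarith
  ultimately show ?thesis by simp
qed

lemma VV_deriv: assumes "1 \<le> l" "l \<le> M" "0 \<le> t"
  shows "(VV l has_real_derivative (\<Sum>q<N l. aw k a l q * (2 * dd l t q * (- hL (x t) l q)))) (at t within {0..})"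
proof -
  have "((\<lambda>s. \<Sum>q<N l. aw k a l q * (dd l s q)^2) has_real_derivative (\<Sum>q<N l. aw k a l q * (2 * dd l t q * (- hL (x t) l q)))) (at t within {0..})"
  proof (rule DERIV_sum, rule DERIV_cmult)
    fix q assume "q \<in> {..<N l}"
    then have "((\<lambda>s. dd l s q) has_real_derivative - hL (x t) l q) (at t within {0..})"
      using dd_deriv assms by auto
    from DERIV_power[OF this, of 2]
    show "((\<lambda>s. (dd l s q)^2) has_real_derivative 2 * dd l t q * (- hL (x t) l q)) (at t within {0..})"
      by (simp add: ac_simps)
  qed
  then show ?thesis unfolding VV_def[abs_def] .
qed

lemma Z_split: assumes "1 \<le> l" "l \<le> M" shows "Z (x t) l r = ee l t r + dd l t r + Y (x t) (Suc l) (grp l r)"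
  by (simp add: ee_def dd_def)

lemma key_ineq: assumes l: "1 \<le> l" "l \<le> M"
  shows "(\<Sum>q<N l. aw k a l q * (2 * dd l t q * (- hL (x t) l q))) \<le> - En l (dd l t) + En l (ee l t)"
proof -
  let ?d = "dd l t" and ?e = "ee l t"
  let ?v = "\<lambda>r. ?d r + ?e r"
  let ?A = "{..<N l}"
  have adjeq: "adj l q s * (Z (x t) l q - Z (x t) l s) = adj l q s * (?v q - ?v s)" for q s
  proof (cases "adj l q s = 0")
    case False
    then obtain p where "ingrp k l p q" "ingrp k l p s" using adjgrp l by blast
    then have "grp l q = grp l s" using grp_eq by simp
    then show ?thesis using Z_split[OF l] by (simp add: algebra_simps)
  qed simp
  have "(\<Sum>q<N l. aw k a l q * (2 * ?d q * (- hL (x t) l q))) = (\<Sum>q<N l. - 2 * (\<Sum>s<N l. adj l q s * ?d q * (?v q - ?v s)))"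
  proof (intro sum.cong refl)
    fix q assume q: "q \<in> ?A"
    have aw: "aw k a l q > 0" using aw_pos l q by auto
    have "aw k a l q * hL (x t) l q = (\<Sum>s<N l. LD N adj l q s * Z (x t) l s)"
      using aw by (simp add: hL_def)
    also have "\<dots> = (\<Sum>s<N l. adj l q s * (Z (x t) l q - Z (x t) l s))"
      using q by (simp add: LD_form)
    also have "\<dots> = (\<Sum>s<N l. adj l q s * (?v q - ?v s))"
      by (intro sum.cong refl) (rule adjeq)
    finally have h: "aw k a l q * hL (x t) l q = (\<Sum>s<N l. adj l q s * (?v q - ?v s))" .
    have "aw k a l q * (2 * ?d q * (- hL (x t) l q)) = - 2 * ?d q * (aw k a l q * hL (x t) l q)"
      by (simp add: algebra_simps)
    also have "\<dots> = - 2 * (\<Sum>s<N l. adj l q s * ?d q * (?v q - ?v s))"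
      unfolding h by (simp add: sum_distrib_left algebra_simps)
    finally show "aw k a l q * (2 * ?d q * (- hL (x t) l q)) = - 2 * (\<Sum>s<N l. adj l q s * ?d q * (?v q - ?v s))" .
  qed
  also have "\<dots> = - 2 * (\<Sum>q\<in>?A. \<Sum>s\<in>?A. adj l q s * ?d q * (?v q - ?v s))"
    by (simp add: sum_distrib_left)
  also have "\<dots> = - (\<Sum>q\<in>?A. \<Sum>s\<in>?A. adj l q s * (?d q - ?d s) * (?v q - ?v s))"
  proof -
    have "(\<Sum>q\<in>?A. \<Sum>s\<in>?A. adj l q s * ?d q * (?v q - ?v s)) = (1/2) * (\<Sum>q\<in>?A. \<Sum>s\<in>?A. adj l q s * (?d q - ?d s) * (?v q - ?v s))"
      by (rule sym_sum_quad) (use adjsym l in blast)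
    then show ?thesis by simp
  qed
  also have "\<dots> \<le> (\<Sum>q\<in>?A. \<Sum>s\<in>?A. adj l q s * (- (1/2) * (?d q - ?d s)^2 + (1/2) * (?e q - ?e s)^2))"
  proof -
    have "- (adj l q s * (?d q - ?d s) * (?v q - ?v s)) \<le> adj l q s * (- (1/2) * (?d q - ?d s)^2 + (1/2) * (?e q - ?e s)^2)" for q s
    proof -
      have an: "0 \<le> adj l q s" using adj_nn l by auto
      show ?thesis by (rule quad_aux[OF an])
    qed
    then have "(\<Sum>q\<in>?A. \<Sum>s\<in>?A. - (adj l q s * (?d q - ?d s) * (?v q - ?v s))) \<le>
        (\<Sum>q\<in>?A. \<Sum>s\<in>?A. adj l q s * (- (1/2) * (?d q - ?d s)^2 + (1/2) * (?e q - ?e s)^2))"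
      by (intro sum_mono) auto
    then show ?thesis by (simp add: sum_negf)
  qed
  also have "\<dots> = - En l ?d + En l ?e"
  proof -
    have "(\<Sum>q\<in>?A. \<Sum>s\<in>?A. adj l q s * (- (1/2) * (?d q - ?d s)^2 + (1/2) * (?e q - ?e s)^2))
       = (\<Sum>q\<in>?A. \<Sum>s\<in>?A. (1/2) * (adj l q s * (?e q - ?e s)^2) - (1/2) * (adj l q s * (?d q - ?d s)^2))"
      by (intro sum.cong refl) (simp add: algebra_simps)
    also have "\<dots> = (1/2) * (\<Sum>q\<in>?A. \<Sum>s\<in>?A. adj l q s * (?e q - ?e s)^2) - (1/2) * (\<Sum>q\<in>?A. \<Sum>s\<in>?A. adj l q s * (?d q - ?d s)^2)"
      by (simp only: sum_subtractf sum_distrib_left)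
    finally show ?thesis by (simp add: En_def)
  qed
  finally show ?thesis .
qed

end



context hsol begin

lemma dd_zero_mean: assumes l: "1 \<le> l" "l \<le> M" and p: "p < N (Suc l)"
  shows "(\<Sum>q\<in>{off k l p..<off k l (Suc p)}. aw k a l q * dd l t q) = 0"
proof -
  let ?G = "{off k l p..<off k l (Suc p)}"
  let ?W = "aw k a (Suc l) p"
  have Wpos: "?W > 0" using aw_pos[of "Suc l" p] l p by simp
  have "(\<Sum>q\<in>?G. aw k a l q * dd l t q) = (\<Sum>q\<in>?G. aw k a l q * Y (x t) l q - aw k a l q * Y (x t) (Suc l) p)"
  proof (intro sum.cong refl)
    fix q assume "q \<in> ?G"
    then have "grp l q = p" using grp_eq G_mem by blast
    then show "aw k a l q * dd l t q = aw k a l q * Y (x t) l q - aw k a l q * Y (x t) (Suc l) p"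
      by (simp add: dd_def algebra_simps)
  qed
  also have "\<dots> = (\<Sum>q\<in>?G. aw k a l q * Y (x t) l q) - ?W * Y (x t) (Suc l) p"
    using aw_Suc[OF l(1), of p] by (simp add: sum_subtractf sum_distrib_right)
  also have "\<dots> = 0" using Wpos l by (simp add: Y_Suc)
  finally show ?thesis .
qed

lemma layer_conv: assumes l: "1 \<le> l" "l \<le> M"
    and elim: "\<And>q. q < N l \<Longrightarrow> ((\<lambda>t. ee l t q) \<longlongrightarrow> 0) at_top"
  shows "q < N l \<Longrightarrow> ((\<lambda>t. dd l t q) \<longlongrightarrow> 0) at_top"
proof -
  assume q: "q < N l"
  obtain C where C: "C > 0" "\<And>u. (\<forall>p<N (Suc l). (\<Sum>q\<in>{off k l p..<off k l (Suc p)}. aw k a l q * u q) = 0) \<Longrightarrow>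
     (\<Sum>q<N l. aw k a l q * (u q)^2) \<le> C * En l u"
    using poincare[OF l] by blast
  have hlim: "((\<lambda>t. En l (ee l t)) \<longlongrightarrow> 0) at_top"
  proof -
    have "((\<lambda>t. (1/2) * (\<Sum>q<N l. \<Sum>s<N l. adj l q s * (ee l t q - ee l t s)^2)) \<longlongrightarrow>
        (1/2) * (\<Sum>q<N l. \<Sum>s<N l. adj l q s * (0 - 0)^2)) at_top"
      by (intro tendsto_intros elim) auto
    then show ?thesis by (simp add: En_def)
  qed
  have Vlim: "(VV l \<longlongrightarrow> 0) at_top"
  proof (rule ode_decay)
    fix t :: real assume t: "0 \<le> t"
    show "(VV l has_real_derivative (\<Sum>q<N l. aw k a l q * (2 * dd l t q * (- hL (x t) l q)))) (at t within {0..})"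
      using VV_deriv l t by blast
    have V: "VV l t \<le> C * En l (dd l t)"
      unfolding VV_def using C(2)[of "dd l t"] dd_zero_mean[OF l] by blast
    have "(\<Sum>q<N l. aw k a l q * (2 * dd l t q * (- hL (x t) l q))) \<le> - En l (dd l t) + En l (ee l t)"
      by (rule key_ineq[OF l])
    also have "- En l (dd l t) \<le> - (1 / C) * VV l t"
      using V C(1) by (simp add: field_simps)
    finally show "(\<Sum>q<N l. aw k a l q * (2 * dd l t q * (- hL (x t) l q))) \<le> - (1 / C) * VV l t + En l (ee l t)"
      by simp
    show "0 \<le> VV l t" unfolding VV_def using aw_pos l
      by (intro sum_nonneg mult_nonneg_nonneg) (auto intro: less_imp_le)
  qed (use C hlim in auto)
  have aq: "aw k a l q > 0" using aw_pos l q by auto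
  have sq: "((\<lambda>t. (dd l t q)^2) \<longlongrightarrow> 0) at_top"
  proof (rule tendsto_sandwich[where f="\<lambda>_. 0" and h="\<lambda>t. VV l t / aw k a l q"])
    show "\<forall>\<^sub>F t in at_top. 0 \<le> (dd l t q)^2" by simp
    show "\<forall>\<^sub>F t in at_top. (dd l t q)^2 \<le> VV l t / aw k a l q"
    proof (intro always_eventually allI)
      fix t
      have nn: "\<And>r. r < N l \<Longrightarrow> 0 \<le> aw k a l r * (dd l t r)^2"
        using aw_pos l by (simp add: less_imp_le)
      have "aw k a l q * (dd l t q)^2 \<le> VV l t"
        unfolding VV_def
        by (rule member_le_sum[where f="\<lambda>q. aw k a l q * (dd l t q)^2"])
           (use q nn in auto)
      then show "(dd l t q)^2 \<le> VV l t / aw k a l q" using aq by (simp add: field_simps)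
    qed
    show "((\<lambda>t. VV l t / aw k a l q) \<longlongrightarrow> 0) at_top"
      using tendsto_divide[OF Vlim tendsto_const, of "aw k a l q"] aq by simp
  qed simp
  have "((\<lambda>t. sqrt ((dd l t q)^2)) \<longlongrightarrow> sqrt 0) at_top"
    by (rule tendsto_real_sqrt[OF sq])
  then have "((\<lambda>t. \<bar>dd l t q\<bar>) \<longlongrightarrow> 0) at_top" by simp
  then show ?thesis by (rule tendsto_rabs_zero_cancel)
qed

lemma ee_next: assumes l: "1 \<le> l" "l \<le> M - 1" and p: "p < N (Suc l)"
  shows "ee (Suc l) t p = (\<Sum>r\<in>{off k l p..<off k l (Suc p)}. c l r * (ee l t r + dd l t r))"
proof -
  let ?G = "{off k l p..<off k l (Suc p)}"
  have "Z (x t) (Suc l) p = (\<Sum>r\<in>?G. c l r * (ee l t r + dd l t r) + c l r * Y (x t) (Suc l) p)"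
  proof -
    have "Z (x t) (Suc l) p = (\<Sum>r\<in>?G. c l r * Z (x t) l r)" using l by (simp add: Z_Suc)
    also have "\<dots> = (\<Sum>r\<in>?G. c l r * (ee l t r + dd l t r) + c l r * Y (x t) (Suc l) p)"
    proof (intro sum.cong refl)
      fix r assume "r \<in> ?G"
      then have "grp l r = p" using grp_eq G_mem by blast
      then show "c l r * Z (x t) l r = c l r * (ee l t r + dd l t r) + c l r * Y (x t) (Suc l) p"
        by (simp add: ee_def dd_def algebra_simps)
    qed
    finally show ?thesis .
  qed
  also have "\<dots> = (\<Sum>r\<in>?G. c l r * (ee l t r + dd l t r)) + Y (x t) (Suc l) p"
    using csum[OF l p] by (simp add: sum.distrib sum_distrib_right[symmetric])
  finally show ?thesis by (simp add: ee_def)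
qed

lemma all_conv: assumes "1 \<le> l" "l \<le> M"
  shows "(\<forall>q<N l. ((\<lambda>t. ee l t q) \<longlongrightarrow> 0) at_top) \<and> (\<forall>q<N l. ((\<lambda>t. dd l t q) \<longlongrightarrow> 0) at_top)"
  using assms
proof (induction l rule: nat_induct_at_least)
  case base
  have e: "\<forall>q<N 1. ((\<lambda>t. ee 1 t q) \<longlongrightarrow> 0) at_top" by (simp add: ee_def)
  then show ?case using layer_conv[of 1] base by auto
next
  case (Suc l)
  have e: "\<forall>p<N (Suc l). ((\<lambda>t. ee (Suc l) t p) \<longlongrightarrow> 0) at_top"
  proof (intro allI impI)
    fix p assume p: "p < N (Suc l)"
    have G: "{off k l p..<off k l (Suc p)} \<subseteq> {..<N l}" using G_sub Suc p by auto
    have "((\<lambda>t. \<Sum>r\<in>{off k l p..<off k l (Suc p)}. c l r * (ee l t r + dd l t r)) \<longlongrightarrow>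
       (\<Sum>r\<in>{off k l p..<off k l (Suc p)}. c l r * (0 + 0))) at_top"
      using Suc G by (intro tendsto_intros) auto
    moreover have "ee (Suc l) t p = (\<Sum>r\<in>{off k l p..<off k l (Suc p)}. c l r * (ee l t r + dd l t r))" for t
      using ee_next[of l p t] Suc p by simp
    ultimately show "((\<lambda>t. ee (Suc l) t p) \<longlongrightarrow> 0) at_top" by simp
  qed
  then show ?case using layer_conv[of "Suc l"] Suc by auto
qed

lemma telescope: assumes "n \<le> M" "i < N 1"
  shows "((\<lambda>t. x t i - Y (x t) (Suc n) (up 1 n i)) \<longlongrightarrow> 0) at_top"
  using assms(1)
proof (induction n)
  case 0 then show ?case by simp
next
  case (Suc n)
  have u: "up 1 n i < N (Suc n)" using up_range[of 1 n i] Suc assms by simp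
  have eq: "x t i - Y (x t) (Suc (Suc n)) (up 1 (Suc n) i) = (x t i - Y (x t) (Suc n) (up 1 n i)) + dd (Suc n) t (up 1 n i)" for t
    using up_Suc[of 1 n i] by (simp add: dd_def)
  have "((\<lambda>t. dd (Suc n) t (up 1 n i)) \<longlongrightarrow> 0) at_top"
    using all_conv[of "Suc n"] Suc u by auto
  then have "((\<lambda>t. (x t i - Y (x t) (Suc n) (up 1 n i)) + dd (Suc n) t (up 1 n i)) \<longlongrightarrow> 0 + 0) at_top"
    using Suc by (intro tendsto_add) auto
  then show ?case unfolding eq by simp
qed

lemma Ytop_const: "0 \<le> t \<Longrightarrow> Y (x t) (Suc M) 0 = Y (x 0) (Suc M) 0"
proof -
  assume t: "0 \<le> t"
  have "\<exists>C. \<forall>s\<in>{0..}. Y (x s) (Suc M) 0 = C"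
  proof (rule has_field_derivative_zero_constant)
    show "convex {0::real..}" by (rule convex_real_interval)
    fix s :: real assume s: "s \<in> {0..}"
    have "((\<lambda>s. Y (x s) (Suc M) 0) has_real_derivative - Y (\<lambda>i. \<Sum>j<N 1. Ltot M N k adj c a i j * x s j) (Suc M) 0) (at s within {0..})"
      using Yx_deriv[of "Suc M" 0 s] s NM by simp
    moreover have "Y (\<lambda>i. \<Sum>j<N 1. Ltot M N k adj c a i j * x s j) (Suc M) 0 = 0"
      using Y_Ltot[of "Suc M" 0 "x s"] NM by simp
    ultimately show "((\<lambda>s. Y (x s) (Suc M) 0) has_real_derivative 0) (at s within {0..})" by simp
  qed
  then show ?thesis using t by force
qed

end



lemma off_concat: "(\<Sum>p<n. \<Sum>q\<in>{off k l p..<off k l (Suc p)}. g q) = (\<Sum>q<off k l n. (g q :: real))"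
proof (induction n)
  case 0 then show ?case by (simp add: off_def)
next
  case (Suc n)
  have "(\<Sum>q<off k l n. g q) + (\<Sum>q\<in>{off k l n..<off k l (Suc n)}. g q) = (\<Sum>q<off k l (Suc n). g q)"
    using sum.atLeastLessThan_concat[of 0 "off k l n" "off k l (Suc n)" g] off_mono[of n "Suc n" k l]
    by (simp add: lessThan_atLeast0)
  then show ?case using Suc by simp
qed

context hsys begin

lemma Y_wsum: "1 \<le> l \<Longrightarrow> l \<le> Suc M \<Longrightarrow> (\<Sum>q<N l. aw k a l q * Y f l q) = (\<Sum>i<N 1. a i * f i)"
proof (induction l rule: nat_induct_at_least)
  case base then show ?case by simp
next
  case (Suc l)
  have "(\<Sum>p<N (Suc l). aw k a (Suc l) p * Y f (Suc l) p) = (\<Sum>p<N (Suc l). \<Sum>q\<in>{off k l p..<off k l (Suc p)}. aw k a l q * Y f l q)"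
  proof (intro sum.cong refl)
    fix p assume "p \<in> {..<N (Suc l)}"
    then have "aw k a (Suc l) p > 0" using aw_pos[of "Suc l" p] Suc by simp
    then show "aw k a (Suc l) p * Y f (Suc l) p = (\<Sum>q\<in>{off k l p..<off k l (Suc p)}. aw k a l q * Y f l q)"
      using Suc by (simp add: Y_Suc)
  qed
  also have "\<dots> = (\<Sum>q<N l. aw k a l q * Y f l q)"
    using off_concat off_N Suc by simp
  finally show ?case using Suc by simp
qed

end

context hsol begin

lemma final_lim: assumes init: "\<And>i. i < N 1 \<Longrightarrow> x 0 i = x0 i" and i: "i < N 1"
  shows "((\<lambda>t. x t i) \<longlongrightarrow> (\<Sum>j<N 1. a j * x0 j) / (\<Sum>j<N 1. a j)) at_top"
proof -
  have M1: "1 \<le> M" using M2 by simp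
  have u: "up 1 M i = 0" using up_range[of 1 M i] i NM by simp
  have tel: "((\<lambda>t. x t i - Y (x t) (Suc M) 0) \<longlongrightarrow> 0) at_top"
    using telescope[of M i] i u by simp
  define Yb where "Yb = Y x0 (Suc M) 0"
  have Yx0: "Y (x 0) (Suc M) 0 = Yb"
    unfolding Yb_def by (rule Y_cong) (use init NM in auto)
  have ev: "\<forall>\<^sub>F t in at_top. (x t i - Y (x t) (Suc M) 0) + Yb = x t i"
    using Ytop_const Yx0 by (auto simp: eventually_at_top_linorder intro!: exI[of _ 0])
  have "((\<lambda>t. (x t i - Y (x t) (Suc M) 0) + Yb) \<longlongrightarrow> 0 + Yb) at_top"
    by (intro tendsto_add tel tendsto_const)
  then have lim: "((\<lambda>t. x t i) \<longlongrightarrow> Yb) at_top"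
    using tendsto_cong[OF ev] by simp
  have w1: "aw k a (Suc M) 0 * Yb = (\<Sum>j<N 1. a j * x0 j)"
    using Y_wsum[of "Suc M" x0] NM unfolding Yb_def by simp
  have one: "Y (\<lambda>i. 1) (Suc M) 0 = 1"
    using Y_up[of "Suc M" "Suc M" 0 "\<lambda>_. 1"] NM by simp
  have w2: "aw k a (Suc M) 0 = (\<Sum>j<N 1. a j)"
    using Y_wsum[of "Suc M" "\<lambda>_. 1"] NM one by simp
  have pos: "aw k a (Suc M) 0 > 0" using aw_pos[of "Suc M" 0] NM by simp
  have "Yb = (\<Sum>j<N 1. a j * x0 j) / (\<Sum>j<N 1. a j)"
    using w1 w2 pos by (simp add: field_simps)
  then show ?thesis using lim by simp
qed

end


theorem theorem3:
  fixes M :: nat and N :: "nat \<Rightarrow> nat" and k :: "nat \<Rightarrow> nat \<Rightarrow> nat"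
    and adj :: "nat \<Rightarrow> nat \<Rightarrow> nat \<Rightarrow> real" and c :: "nat \<Rightarrow> nat \<Rightarrow> real" and a :: "nat \<Rightarrow> real"
    and x :: "real \<Rightarrow> nat \<Rightarrow> real" and x0 :: "nat \<Rightarrow> real"
  assumes hs: "hier_system M N k adj c a"
    and ode: "\<And>t i. 0 \<le> t \<Longrightarrow> i < N 1 \<Longrightarrow>
        ((\<lambda>s. x s i) has_real_derivative - (\<Sum>j<N 1. Ltot M N k adj c a i j * x t j)) (at t within {0..})"
    and init: "\<And>i. i < N 1 \<Longrightarrow> x 0 i = x0 i"
  shows "(\<forall>i<N 1. ((\<lambda>t. x t i) \<longlongrightarrow> (\<Sum>j<N 1. a j * x0 j) / (\<Sum>j<N 1. a j)) at_top)
       \<and> ((\<forall>i<N 1. \<forall>j<N 1. a i = a j) \<longrightarrow>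
           (\<forall>i<N 1. ((\<lambda>t. x t i) \<longlongrightarrow> (\<Sum>j<N 1. x0 j) / real (N 1)) at_top))"
proof -
  interpret hsol M N k adj c a x
    by (unfold_locales; rule hs ode; assumption)
  have A: "\<forall>i<N 1. ((\<lambda>t. x t i) \<longlongrightarrow> (\<Sum>j<N 1. a j * x0 j) / (\<Sum>j<N 1. a j)) at_top"
  proof (intro allI impI)
    fix i assume "i < N 1"
    show "((\<lambda>t. x t i) \<longlongrightarrow> (\<Sum>j<N 1. a j * x0 j) / (\<Sum>j<N 1. a j)) at_top"
      using init \<open>i < N 1\<close> by (rule final_lim)
  qed
  have B: "(\<Sum>j<N 1. a j * x0 j) / (\<Sum>j<N 1. a j) = (\<Sum>j<N 1. x0 j) / real (N 1)"
    if eq: "\<forall>i<N 1. \<forall>j<N 1. a i = a j"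
  proof -
    have n: "0 < N 1" using Npos[of 1] M2 by simp
    have a0: "0 < a 0" using apos n by simp
    have aj: "\<And>j. j < N 1 \<Longrightarrow> a j = a 0" using eq n by blast
    have "(\<Sum>j<N 1. a j * x0 j) = (\<Sum>j<N 1. a 0 * x0 j)"
    proof (intro sum.cong refl)
      fix j assume "j \<in> {..<N 1}"
      then have "a j = a 0" by (intro aj) simp
      then show "a j * x0 j = a 0 * x0 j" by simp
    qed
    then have s1: "(\<Sum>j<N 1. a j * x0 j) = a 0 * (\<Sum>j<N 1. x0 j)"
      by (simp add: sum_distrib_left)
    have "(\<Sum>j<N 1. a j) = (\<Sum>j<N 1. a 0)"
    proof (intro sum.cong refl)
      fix j assume "j \<in> {..<N 1}"
      then show "a j = a 0" by (intro aj) simp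
    qed
    then have s2: "(\<Sum>j<N 1. a j) = real (N 1) * a 0" by simp
    show ?thesis using s1 s2 a0 n by simp
  qed
  show ?thesis
  proof (intro conjI impI)
    show "\<forall>i<N 1. ((\<lambda>t. x t i) \<longlongrightarrow> (\<Sum>j<N 1. a j * x0 j) / (\<Sum>j<N 1. a j)) at_top" by (rule A)
  next
    assume eq: "\<forall>i<N 1. \<forall>j<N 1. a i = a j"
    show "\<forall>i<N 1. ((\<lambda>t. x t i) \<longlongrightarrow> (\<Sum>j<N 1. x0 j) / real (N 1)) at_top"
      using A unfolding B[OF eq] .
  qed
qed

end
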